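(* Let $s\ge 1$, $q=4^{2s}$, and let $\theta$ be the automorphism of $F_q$ given by $\theta(a)=a^{4^s}$. Let $h(x)\in F_q[x;\theta]$ be a palindromic polynomial of degree $t$. (1) If $t$ is odd, then its skew reciprocal polynomial $h^R(x)$ is a $\theta$-palindromic polynomial. (2) If $t$ is even, then $h^R(x)$ is also a palindromic polynomial.
   Context: $F_q[x;\theta]$ is the skew polynomial ring: polynomials $\sum a_ix^i$ with $a_i\in F_q$, usual addition, and multiplication determined by $xa=\theta(a)x$ for $a\in F_q$. For $f(x)=\sum_{i=0}^t a_ix^i$ of degree $t$, the skew reciprocal polynomial is $f^R(x)=\sum_{i=0}^t x^ia_{t-i}=\sum_{i=0}^t\theta^i(a_{t-i})x^i$. A polynomial $f(x)=a_0+\dots+a_tx^t$ of degree $t$ is palindromic if $a_i=a_{t-i}$ for all $i$, and $\theta$-palindromic if $a_i=\theta(a_{t-i})$ for all $i$. *)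

theory Defs
  imports "HOL-Computational_Algebra.Polynomial" "HOL-Library.Cardinality"
begin

text \<open>Elements of the skew polynomial ring F[x;theta] are represented by their
coefficient sequences, i.e. as values of type 'a poly (same additive structure,
same coefficients and degree); the skew multiplication is not needed for the
statement, which concerns coefficients only.\<close>

definition skew_reciprocal :: "('a::zero \<Rightarrow> 'a) \<Rightarrow> 'a poly \<Rightarrow> 'a poly" where
  "skew_reciprocal \<theta> f =
     Poly (map (\<lambda>i. (\<theta> ^^ i) (coeff f (degree f - i))) [0..<Suc (degree f)])"

definition palindromic :: "'a::zero poly \<Rightarrow> bool" where
  "palindromic f \<longleftrightarrow> (\<forall>i\<le>degree f. coeff f i = coeff f (degree f - i))"

definition theta_palindromic :: "('a::zero \<Rightarrow> 'a) \<Rightarrow> 'a poly \<Rightarrow> bool" where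
  "theta_palindromic \<theta> f \<longleftrightarrow> (\<forall>i\<le>degree f. coeff f i = \<theta> (coeff f (degree f - i)))"

end

theory Submission
  imports Defs
begin

lemma fermat_field:
  fixes a :: "'a::{finite,field}"
  shows "a ^ CARD('a) = a"
proof (cases "a = 0")
  case True then show ?thesis by (simp add: power_0_left)
next
  case False
  let ?U = "UNIV - {0::'a}"
  have bij: "bij_betw (\<lambda>x. a * x) ?U ?U"
    unfolding bij_betw_def
  proof
    show "inj_on ((*) a) ?U" using False by (auto simp: inj_on_def)
    show "(*) a ` ?U = ?U"
    proof
      show "(*) a ` ?U \<subseteq> ?U" using False by auto
      show "?U \<subseteq> (*) a ` ?U"
      proof
        fix y assume "y \<in> ?U"
        then have "y = a * (y / a)" "y / a \<in> ?U" using False by auto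
        then show "y \<in> (*) a ` ?U" by blast
      qed
    qed
  qed
  have "prod (\<lambda>x. a * x) ?U = prod (\<lambda>x. x) ?U"
    using prod.reindex_bij_betw[OF bij, of "\<lambda>x. x"] by simp
  moreover have "prod (\<lambda>x. a * x) ?U = a ^ card ?U * prod (\<lambda>x. x) ?U"
    by (simp add: prod.distrib)
  moreover have "prod (\<lambda>x. x) ?U \<noteq> 0" by simp
  ultimately have "a ^ card ?U = 1" by simp
  moreover have "card ?U = CARD('a) - 1" by (simp add: card_Diff_singleton)
  moreover have "CARD('a) \<ge> 1" by (simp add: Suc_leI)
  ultimately show ?thesis
    by (metis One_nat_def Suc_diff_1 mult.right_neutral power_Suc le_less_Suc_eq not_less_eq_eq zero_less_Suc less_le_trans)
qed

theorem theorem5: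
  fixes s t :: nat and h :: "'a::{finite,field} poly" and \<theta> :: "'a \<Rightarrow> 'a"
  assumes "s \<ge> 1"
    and "CARD('a) = 4 ^ (2 * s)"
    and "\<theta> = (\<lambda>a. a ^ (4 ^ s))"
    and "palindromic h"
    and "degree h = t"
  shows "(odd t \<longrightarrow> theta_palindromic \<theta> (skew_reciprocal \<theta> h))
       \<and> (even t \<longrightarrow> palindromic (skew_reciprocal \<theta> h))"
proof -
  have inv: "\<theta> (\<theta> a) = a" for a
  proof -
    have "\<theta> (\<theta> a) = a ^ (4 ^ s * 4 ^ s)" using assms(3) by (simp add: power_mult)
    also have "4 ^ s * 4 ^ s = CARD('a)" using assms(2)
      by (simp add: power_add[symmetric] mult_2)
    finally show ?thesis by (simp add: fermat_field)
  qed
  have it: "(\<theta> ^^ i) a = (if even i then a else \<theta> a)" for i a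
    by (induction i) (auto simp: inv)
  have th0: "\<theta> 0 = 0" using assms(3) by simp
  have thinj: "\<theta> a = 0 \<longleftrightarrow> a = 0" for a using inv th0 by metis
  define R where "R = skew_reciprocal \<theta> h"
  have cR: "coeff R i = (if i \<le> t then (\<theta> ^^ i) (coeff h i) else 0)" for i
  proof -
    have "coeff R i = (if i < Suc t then (\<theta> ^^ i) (coeff h (t - i)) else 0)"
      unfolding R_def skew_reciprocal_def using assms(5)
      by (simp add: coeff_Poly_eq nth_default_def del: upt_Suc)
    moreover have "i \<le> t \<Longrightarrow> coeff h (t - i) = coeff h i"
      using assms(4,5) unfolding palindromic_def by (metis diff_diff_cancel diff_le_self)
    ultimately show ?thesis by auto
  qed
  have dR: "degree R = t"
  proof (cases "h = 0")
    case True
    then have "R = 0" by (intro poly_eqI) (simp add: cR th0 it)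
    then show ?thesis using True assms(5) by simp
  next
    case False
    show ?thesis
    proof (rule antisym)
      show "degree R \<le> t" by (rule degree_le) (simp add: cR)
      have "coeff h t \<noteq> 0" using False assms(5) by (metis leading_coeff_0_iff)
      then have "coeff R t \<noteq> 0" by (simp add: cR it thinj)
      then show "t \<le> degree R" by (rule le_degree)
    qed
  qed
  have pal: "i \<le> t \<Longrightarrow> coeff h (t - i) = coeff h i" for i
    using assms(4,5) unfolding palindromic_def by (metis diff_diff_cancel diff_le_self)
  show ?thesis
    unfolding R_def[symmetric] theta_palindromic_def palindromic_def dR
  proof (intro conjI impI allI)
    fix i assume "odd t" "i \<le> t"
    then show "coeff R i = \<theta> (coeff R (t - i))"
      by (simp add: cR it inv pal)
  next
    fix i assume "even t" "i \<le> t"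
    then show "coeff R i = coeff R (t - i)"
      by (simp add: cR it inv pal)
  qed
qed

end
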